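(* The bi-immune symmetric group $G_{\mathfrak{B}}$ is dense in $\mathrm{Sym}(\mathbb{N})$ with respect to the topology of pointwise convergence (equivalently, with respect to the metric $d$ below).
   Context: $\mathbb{N}$ denotes the non-negative integers, and $\mathrm{Sym}(\mathbb{N})$ the group of all permutations of $\mathbb{N}$ under composition ($g \circ f$ means apply $f$ first). For $\sigma, \tau \in \mathrm{Sym}(\mathbb{N})$ let $\rho(\sigma,\tau) = 0$ if $\sigma = \tau$, and otherwise $\rho(\sigma,\tau) = 2^{-j}$ where $j$ is the least $i$ with $\sigma(i) \neq \tau(i)$; set $d(\sigma,\tau) = \max\{\rho(\sigma,\tau), \rho(\sigma^{-1},\tau^{-1})\}$, a complete metric inducing the pointwise convergence topology. For $i \in \mathbb{N}$, $\sigma_{(i)}$ is the permutation swapping $i$ and $i+1$ and fixing all other numbers. For $A \subseteq \mathbb{N}$ with increasing enumeration $a_0 < a_1 < \cdots$, define $\sigma_A(x) = \lim_{n \to \infty} (\sigma_{(a_0)} \circ \sigma_{(a_1)} \circ \cdots \circ \sigma_{(a_n)})(x)$ (eventually constant for each $x$). A set $A$ is immune if it is infinite and contains no infinite computably enumerable subset; $A$ is bi-immune if both $A$ and $\mathbb{N} - A$ are immune. For bi-immune $A$, $\sigma_A$ is a permutation of $\mathbb{N}$. The bi-immune symmetric group $G_{\mathfrak{B}}$ is the subgroup of $\mathrm{Sym}(\mathbb{N})$ generated by $\{\sigma_A : A \text{ bi-immune}\}$. *)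

theory Defs
  imports Complex_Main "HOL-Library.Infinite_Set" "HOL-Algebra.Bij" "HOL-Algebra.Generated_Groups"
begin

datatype recf = Zero | Succ | Proj nat | Comp recf "recf list" | Prec recf recf | Mn recf

inductive eval :: "recf \<Rightarrow> nat list \<Rightarrow> nat \<Rightarrow> bool" where
  eval_Zero: "eval Zero xs 0"
| eval_Succ: "eval Succ (x # xs) (Suc x)"
| eval_Proj: "i < length xs \<Longrightarrow> eval (Proj i) xs (xs ! i)"
| eval_Comp: "list_all2 (\<lambda>g y. eval g xs y) gs ys \<Longrightarrow> eval f ys r \<Longrightarrow> eval (Comp f gs) xs r"
| eval_Prec0: "eval f xs r \<Longrightarrow> eval (Prec f g) (0 # xs) r"
| eval_PrecS: "eval (Prec f g) (n # xs) r \<Longrightarrow> eval g (n # r # xs) r'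
               \<Longrightarrow> eval (Prec f g) (Suc n # xs) r'"
| eval_Mn: "eval f (y # xs) 0 \<Longrightarrow> (\<forall>z<y. \<exists>r. eval f (z # xs) r \<and> 0 < r)
               \<Longrightarrow> eval (Mn f) xs y"

definition ce :: "nat set \<Rightarrow> bool" where
  "ce A \<longleftrightarrow> (\<exists>f. A = {x. \<exists>y. eval f [x] y})"

definition immune :: "nat set \<Rightarrow> bool" where
  "immune A \<longleftrightarrow> infinite A \<and> \<not> (\<exists>B. B \<subseteq> A \<and> infinite B \<and> ce B)"

definition bi_immune :: "nat set \<Rightarrow> bool" where
  "bi_immune A \<longleftrightarrow> immune A \<and> immune (UNIV - A)"

definition adj_swap :: "nat \<Rightarrow> nat \<Rightarrow> nat" where
  "adj_swap i x = (if x = i then Suc i else if x = Suc i then i else x)"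

text \<open>prefix_comp A n = sigma_(a_0) o sigma_(a_1) o ... o sigma_(a_n)\<close>
primrec prefix_comp :: "nat set \<Rightarrow> nat \<Rightarrow> nat \<Rightarrow> nat" where
  "prefix_comp A 0 = adj_swap (enumerate A 0)"
| "prefix_comp A (Suc n) = prefix_comp A n \<circ> adj_swap (enumerate A (Suc n))"

definition sigma_set :: "nat set \<Rightarrow> nat \<Rightarrow> nat" where
  "sigma_set A x = (THE y. \<exists>N. \<forall>n\<ge>N. prefix_comp A n x = y)"

definition G_B :: "(nat \<Rightarrow> nat) set" where
  "G_B = generate (BijGroup (UNIV :: nat set)) {sigma_set A | A. bi_immune A}"

definition rho :: "(nat \<Rightarrow> nat) \<Rightarrow> (nat \<Rightarrow> nat) \<Rightarrow> real" where
  "rho s t = (if s = t then 0 else (1/2) ^ (LEAST i. s i \<noteq> t i))"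

definition perm_dist :: "(nat \<Rightarrow> nat) \<Rightarrow> (nat \<Rightarrow> nat) \<Rightarrow> real" where
  "perm_dist s t = max (rho s t) (rho (Hilbert_Choice.inv s) (Hilbert_Choice.inv t))"

end

theory Submission imports Defs "HOL-Library.Countable" begin


lemma swap_fix: "x < i \<or> x > Suc i \<Longrightarrow> adj_swap i x = x"
  by (auto simp: adj_swap_def)

lemma swap_swap[simp]: "adj_swap i (adj_swap i x) = x"
  by (auto simp: adj_swap_def)

lemma swap_bij: "bij (adj_swap i)"
  by (rule o_bij[of "adj_swap i"]) (auto simp: fun_eq_iff)

lemma swap_inj: "inj (adj_swap i)"
  by (metis injI swap_swap)

lemma swap_le: "x \<le> c \<Longrightarrow> a \<noteq> c \<Longrightarrow> adj_swap a x \<le> c"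
  by (auto simp: adj_swap_def)

lemma prefix_stable:
  assumes "infinite A" "x \<le> n"
  shows "prefix_comp A n x = prefix_comp A x x"
  using assms(2)
proof (induction n)
  case 0 then show ?case by simp
next
  case (Suc n)
  show ?case
  proof (cases "x = Suc n")
    case False
    then have "x \<le> n" using Suc by simp
    have "Suc n \<le> enumerate A (Suc n)" using le_enumerate assms(1) by blast
    then have "adj_swap (enumerate A (Suc n)) x = x" using \<open>x \<le> n\<close> by (intro swap_fix) simp
    then show ?thesis using Suc \<open>x \<le> n\<close> by simp
  qed simp
qed

lemma sigma_eq:
  assumes "infinite A"
  shows "sigma_set A x = prefix_comp A x x"
  unfolding sigma_set_def
proof (rule the_equality)
  show "\<exists>N. \<forall>n\<ge>N. prefix_comp A n x = prefix_comp A x x"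
    using prefix_stable[OF assms] by blast
next
  fix y assume "\<exists>N. \<forall>n\<ge>N. prefix_comp A n x = y"
  then obtain N where "\<forall>n\<ge>N. prefix_comp A n x = y" by blast
  then have "prefix_comp A (max N x) x = y" by simp
  then show "y = prefix_comp A x x" using prefix_stable[OF assms, of x "max N x"] by simp
qed

lemma sigma_eq':
  assumes "infinite A" "x \<le> n"
  shows "sigma_set A x = prefix_comp A n x"
  using sigma_eq[OF assms(1)] prefix_stable[OF assms] by simp

lemma prefix_inj: "inj (prefix_comp A n)"
proof (induction n)
  case 0 then show ?case by (simp add: swap_inj)
next
  case (Suc n) then show ?case by (simp only: prefix_comp.simps) (rule inj_compose[OF Suc swap_inj])
qed

lemma sigma_inj:
  assumes "infinite A" shows "inj (sigma_set A)"
proof (rule injI)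
  fix x y assume "sigma_set A x = sigma_set A y"
  then have "prefix_comp A (max x y) x = prefix_comp A (max x y) y"
    using sigma_eq'[OF assms, of x "max x y"] sigma_eq'[OF assms, of y "max x y"] by simp
  then show "x = y" using prefix_inj[of A "max x y"] by (simp add: inj_eq)
qed

lemma prefix_bound: "c \<notin> A \<Longrightarrow> infinite A \<Longrightarrow> x \<le> c \<Longrightarrow> prefix_comp A n x \<le> c"
proof (induction n arbitrary: x)
  case 0
  then show ?case using enumerate_in_set[OF 0(2)] by (auto intro!: swap_le)
next
  case (Suc n)
  have "adj_swap (enumerate A (Suc n)) x \<le> c"
    using Suc enumerate_in_set[OF Suc(3)] by (intro swap_le) auto
  then show ?case using Suc by simp
qed

lemma sigma_surj:
  assumes "infinite A" "infinite (UNIV - A)"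
  shows "surj (sigma_set A)"
proof -
  { fix y
    obtain c where c: "c \<notin> A" "c > y"
      using assms(2) unfolding infinite_nat_iff_unbounded by auto
    have sub: "sigma_set A ` {..c} \<subseteq> {..c}"
      using sigma_eq[OF assms(1)] prefix_bound[OF c(1) assms(1)] by auto
    have "inj_on (sigma_set A) {..c}" using sigma_inj[OF assms(1)] inj_on_subset by blast
    then have "sigma_set A ` {..c} = {..c}"
      using sub by (simp add: endo_inj_surj)
    then have "y \<in> sigma_set A ` {..c}" using c by auto
    then have "y \<in> range (sigma_set A)" by blast }
  then show ?thesis by auto
qed

lemma sigma_bij:
  assumes "infinite A" "infinite (UNIV - A)"
  shows "bij (sigma_set A)"
  unfolding bij_def using sigma_inj[OF assms(1)] sigma_surj[OF assms] by (rule conjI)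

lemma prefix_insert:
  assumes "infinite A" "\<forall>a\<in>A. k < a"
  shows "prefix_comp (insert k A) (Suc n) = adj_swap k \<circ> prefix_comp A n"
proof -
  have e0: "enumerate (insert k A) 0 = k"
  proof -
    have "(LEAST x. x \<in> insert k A) = k" using assms(2) by (intro Least_equality) (auto simp: less_imp_le)
    then show ?thesis by (simp add: enumerate_0)
  qed
  have ek: "enumerate (insert k A) (Suc m) = enumerate A m" for m
  proof -
    have "insert k A - {k} = A" using assms(2) by auto
    then show ?thesis using e0 by (simp add: enumerate_Suc')
  qed
  show ?thesis
  proof (induction n)
    case 0
    show ?case by (simp only: prefix_comp.simps e0 ek)
  next
    case (Suc n)
    have "prefix_comp (insert k A) (Suc (Suc n)) = prefix_comp (insert k A) (Suc n) \<circ> adj_swap (enumerate A (Suc n))"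
      by (simp only: prefix_comp.simps ek)
    also have "\<dots> = (adj_swap k \<circ> prefix_comp A n) \<circ> adj_swap (enumerate A (Suc n))"
      by (simp only: Suc.IH)
    also have "\<dots> = adj_swap k \<circ> prefix_comp A (Suc n)"
      by (simp only: prefix_comp.simps comp_assoc)
    finally show ?case .
  qed
qed

lemma sigma_insert:
  assumes "infinite A" "\<forall>a\<in>A. k < a"
  shows "sigma_set (insert k A) = adj_swap k \<circ> sigma_set A"
proof
  fix x
  have "infinite (insert k A)" using assms by simp
  then have "sigma_set (insert k A) x = prefix_comp (insert k A) (Suc x) x"
    by (rule sigma_eq') simp
  also have "\<dots> = adj_swap k (prefix_comp A x x)"
    unfolding prefix_insert[OF assms] by (rule comp_apply)
  also have "\<dots> = adj_swap k (sigma_set A x)"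
    unfolding sigma_eq[OF assms(1)] ..
  finally show "sigma_set (insert k A) x = (adj_swap k \<circ> sigma_set A) x" by simp
qed



instance recf :: countable by countable_datatype

definition dom_r :: "recf \<Rightarrow> nat set" where "dom_r f = {x. \<exists>y. eval f [x] y}"

definition Wn :: "nat \<Rightarrow> nat set" where
  "Wn n = (if infinite (dom_r (from_nat (fst (prod_decode n)))) then dom_r (from_nat (fst (prod_decode n))) else UNIV)"

lemma Wn_inf: "infinite (Wn n)" by (simp add: Wn_def)

definition pick :: "nat \<Rightarrow> nat set \<Rightarrow> nat \<times> nat" where
  "pick m S = (SOME p. fst p \<in> S \<and> snd p \<in> S \<and> m \<le> fst p \<and> fst p < snd p)"

lemma pick: assumes "infinite S"
  shows "fst (pick m S) \<in> S \<and> snd (pick m S) \<in> S \<and> m \<le> fst (pick m S) \<and> fst (pick m S) < snd (pick m S)"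
proof -
  obtain x where x: "x \<in> S" "m \<le> x" using assms by (meson infinite_nat_iff_unbounded_le)
  obtain y where y: "y \<in> S" "Suc x \<le> y" using assms by (meson infinite_nat_iff_unbounded_le)
  have "\<exists>p. fst p \<in> S \<and> snd p \<in> S \<and> m \<le> fst p \<and> fst p < snd p"
    using x y by (intro exI[of _ "(x,y)"]) auto
  then show ?thesis unfolding pick_def by (rule someI_ex)
qed

primrec sq :: "nat \<Rightarrow> nat \<times> nat" where
  "sq 0 = pick 0 (Wn 0)"
| "sq (Suc n) = pick (Suc (snd (sq n))) (Wn (Suc n))"

lemma sq_props: "fst (sq n) \<in> Wn n \<and> snd (sq n) \<in> Wn n \<and> fst (sq n) < snd (sq n)"
  by (cases n) (use pick[OF Wn_inf] in auto)

lemma sq_step: "snd (sq n) < fst (sq (Suc n))"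
  using pick[OF Wn_inf, of "Suc (snd (sq n))" "Suc n"] by simp

lemma xs_mono: "strict_mono (\<lambda>n. fst (sq n))"
  unfolding strict_mono_Suc_iff by (meson order.strict_trans sq_props sq_step)

lemma ys_mono: "strict_mono (\<lambda>n. snd (sq n))"
  unfolding strict_mono_Suc_iff by (meson order.strict_trans sq_props sq_step)

lemma xs_ne_ys: "fst (sq i) \<noteq> snd (sq j)"
proof (cases "i \<le> j")
  case True
  then have "fst (sq i) \<le> fst (sq j)" using xs_mono by (metis strict_mono_less_eq)
  then show ?thesis using sq_props[of j] by simp
next
  case False
  then have "Suc j \<le> i" by simp
  then have "fst (sq (Suc j)) \<le> fst (sq i)" using xs_mono by (metis strict_mono_less_eq)
  then show ?thesis using sq_step[of j] by simp
qed

definition good :: "nat set \<Rightarrow> bool" where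
  "good A \<longleftrightarrow> (\<forall>B. ce B \<and> infinite B \<longrightarrow> infinite (B \<inter> A) \<and> infinite (B - A))"

lemma good_exists: "good (range (\<lambda>n. fst (sq n)))"
  unfolding good_def
proof (intro allI impI)
  fix B assume B: "ce B \<and> infinite B"
  then obtain f where f: "B = dom_r f" unfolding ce_def dom_r_def by blast
  define e where "e = to_nat f"
  define h where "h j = prod_encode (e, j)" for j
  have Wh: "Wn (h j) = B" for j using B f by (simp add: Wn_def h_def e_def)
  have injh: "inj h" unfolding h_def by (meson injI inj_prod_encode inj_eq prod.inject)
  have inj1: "inj (\<lambda>j. fst (sq (h j)))"
    using inj_compose[OF strict_mono_imp_inj_on[OF xs_mono] injh] by (simp add: comp_def)
  have inj2: "inj (\<lambda>j. snd (sq (h j)))"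
    using inj_compose[OF strict_mono_imp_inj_on[OF ys_mono] injh] by (simp add: comp_def)
  have "range (\<lambda>j. fst (sq (h j))) \<subseteq> B \<inter> range (\<lambda>n. fst (sq n))"
    using sq_props Wh by auto
  moreover have "range (\<lambda>j. snd (sq (h j))) \<subseteq> B - range (\<lambda>n. fst (sq n))"
    using sq_props Wh xs_ne_ys by auto (metis xs_ne_ys)
  ultimately show "infinite (B \<inter> range (\<lambda>n. fst (sq n))) \<and> infinite (B - range (\<lambda>n. fst (sq n)))"
    using range_inj_infinite[OF inj1] range_inj_infinite[OF inj2] infinite_super by blast
qed

lemma good_finmod: assumes "good A" "finite (A - C)" "finite (C - A)" shows "good C"
  unfolding good_def
proof (intro allI impI)
  fix B assume B: "ce B \<and> infinite B"
  then have "infinite (B \<inter> A)" "infinite (B - A)" using assms(1) good_def by auto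
  moreover have "(B \<inter> A) - (A - C) \<subseteq> B \<inter> C" "(B - A) - (C - A) \<subseteq> B - C" by auto
  ultimately show "infinite (B \<inter> C) \<and> infinite (B - C)"
    using assms(2,3) by (meson Diff_infinite_finite infinite_super)
qed

lemma ce_UNIV: "ce UNIV"
  unfolding ce_def by (rule exI[of _ Zero]) (auto intro: eval_Zero)

lemma good_bi: assumes "good A" shows "bi_immune A"
proof -
  have "infinite (UNIV \<inter> A) \<and> infinite (UNIV - A)" using assms ce_UNIV infinite_UNIV_nat unfolding good_def by blast
  then have i1: "infinite A" "infinite (UNIV - A)" by auto
  have n1: "\<not> (\<exists>B\<subseteq>A. infinite B \<and> ce B)"
  proof
    assume "\<exists>B\<subseteq>A. infinite B \<and> ce B"
    then obtain B where "B \<subseteq> A" "infinite B" "ce B" by blast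
    then show False using assms unfolding good_def by (metis Diff_eq_empty_iff finite.emptyI)
  qed
  have n2: "\<not> (\<exists>B\<subseteq>UNIV - A. infinite B \<and> ce B)"
  proof
    assume "\<exists>B\<subseteq>UNIV - A. infinite B \<and> ce B"
    then obtain B where "B \<subseteq> UNIV - A" "infinite B" "ce B" by blast
    then have "B \<inter> A = {}" by blast
    then show False using assms \<open>infinite B\<close> \<open>ce B\<close> unfolding good_def by (metis finite.emptyI)
  qed
  show ?thesis unfolding bi_immune_def immune_def using i1 n1 n2 by blast
qed

lemma bi_inf: "bi_immune A \<Longrightarrow> infinite A \<and> infinite (UNIV - A)"
  by (simp add: bi_immune_def immune_def)



abbreviation "GG \<equiv> BijGroup (UNIV :: nat set)"

lemma Bij_UNIV: "bij f \<Longrightarrow> f \<in> Bij UNIV"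
  by (simp add: Bij_def extensional_def)

lemma carrier_GG: "carrier GG = Bij UNIV" by (simp add: BijGroup_def)

lemma mult_GG: "f \<in> Bij UNIV \<Longrightarrow> g \<in> Bij UNIV \<Longrightarrow> f \<otimes>\<^bsub>GG\<^esub> g = f \<circ> g"
  by (simp add: BijGroup_def compose_def fun_eq_iff)

lemma inv_GG: "bij f \<Longrightarrow> inv\<^bsub>GG\<^esub> f = Hilbert_Choice.inv f"
proof -
  assume "bij f"
  then have "inv\<^bsub>GG\<^esub> f = (\<lambda>x\<in>UNIV. inv_into UNIV f x)" using inv_BijGroup Bij_UNIV by blast
  then show ?thesis by (simp add: fun_eq_iff)
qed

lemma one_GG: "\<one>\<^bsub>GG\<^esub> = id" by (simp add: BijGroup_def fun_eq_iff)

lemma gens_carrier: "{sigma_set A | A. bi_immune A} \<subseteq> carrier GG"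
  using sigma_bij bi_inf Bij_UNIV carrier_GG by blast

lemma GB_carrier: "G_B \<subseteq> carrier GG"
  unfolding G_B_def using group.generate_in_carrier[OF group_BijGroup gens_carrier] by blast

lemma GB_id: "id \<in> G_B"
  using generate.one[of GG "{sigma_set A | A. bi_immune A}"] one_GG unfolding G_B_def by simp

lemma GB_mult: assumes "f \<in> G_B" "g \<in> G_B" shows "f \<circ> g \<in> G_B"
proof -
  have "f \<otimes>\<^bsub>GG\<^esub> g \<in> G_B" using assms unfolding G_B_def by (rule generate.eng)
  moreover have "f \<in> Bij UNIV" "g \<in> Bij UNIV" using assms GB_carrier carrier_GG by auto
  ultimately show ?thesis using mult_GG by simp
qed

lemma swap_GB: "adj_swap k \<in> G_B"
proof -
  obtain A where A: "good A" using good_exists by blast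
  define A' where "A' = A \<inter> {Suc k..}"
  define A'' where "A'' = insert k A'"
  have f1: "finite (A - A')" by (rule finite_subset[of _ "{..k}"]) (auto simp: A'_def)
  have f2: "finite (A' - A)" by (rule finite_subset[of _ "{}"]) (auto simp: A'_def)
  have gA': "good A'" using good_finmod[OF A f1 f2] .
  have f3: "finite (A' - A'')" by (rule finite_subset[of _ "{}"]) (auto simp: A''_def)
  have f4: "finite (A'' - A')" by (rule finite_subset[of _ "{k}"]) (auto simp: A''_def)
  have gA'': "good A''" using good_finmod[OF gA' f3 f4] .
  have bA': "bi_immune A'" "bi_immune A''" using gA' gA'' good_bi by auto
  have infA': "infinite A'" "infinite (UNIV - A')" using bi_inf bA' by auto
  have lt: "\<forall>a\<in>A'. k < a" by (auto simp: A'_def)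
  have s'': "sigma_set A'' = adj_swap k \<circ> sigma_set A'"
    unfolding A''_def using sigma_insert[OF infA'(1) lt] .
  have bij': "bij (sigma_set A')" using sigma_bij infA' by blast
  have c'': "sigma_set A'' \<in> Bij UNIV" using gens_carrier bA' carrier_GG by blast
  have i: "inv\<^bsub>GG\<^esub> (sigma_set A') = Hilbert_Choice.inv (sigma_set A')" using inv_GG[OF bij'] .
  have ci: "Hilbert_Choice.inv (sigma_set A') \<in> Bij UNIV"
    using Bij_UNIV[OF bij_imp_bij_inv[OF bij']] .
  have h1: "sigma_set A'' \<in> {sigma_set A | A. bi_immune A}" using bA'(2) by blast
  have h2: "sigma_set A' \<in> {sigma_set A | A. bi_immune A}" using bA'(1) by blast
  have "sigma_set A'' \<otimes>\<^bsub>GG\<^esub> inv\<^bsub>GG\<^esub> (sigma_set A') \<in> G_B"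
    unfolding G_B_def by (rule generate.eng[OF generate.incl[OF h1] generate.inv[OF h2]])
  then have "sigma_set A'' \<circ> Hilbert_Choice.inv (sigma_set A') \<in> G_B"
    using mult_GG[OF c'' ci] i by simp
  moreover have "sigma_set A'' \<circ> Hilbert_Choice.inv (sigma_set A') = adj_swap k"
  proof -
    have "sigma_set A' \<circ> Hilbert_Choice.inv (sigma_set A') = id" using bij' bij_is_surj surj_iff by blast
    then show ?thesis using s'' by (simp add: comp_assoc)
  qed
  ultimately show ?thesis by simp
qed

lemma fin_perm_gen:
  assumes H1: "id \<in> H" and H2: "\<And>j \<pi>. \<pi> \<in> H \<Longrightarrow> adj_swap j \<circ> \<pi> \<in> H"
  shows "\<forall>\<pi>. bij \<pi> \<longrightarrow> (\<forall>x\<ge>K. \<pi> x = x) \<longrightarrow> \<pi> \<in> H"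
proof (induction K)
  case 0
  show ?case
  proof (intro allI impI)
    fix \<pi> :: "nat \<Rightarrow> nat" assume "\<forall>x\<ge>0. \<pi> x = x"
    then have "\<pi> = id" by (simp add: fun_eq_iff)
    then show "\<pi> \<in> H" using H1 by simp
  qed
next
  case (Suc K)
  have "\<forall>\<pi>. bij \<pi> \<longrightarrow> (\<forall>x\<ge>Suc K. \<pi> x = x) \<longrightarrow> K - \<pi> K = d \<longrightarrow> \<pi> \<in> H" for d
  proof (induction d)
    case 0
    show ?case
    proof (intro allI impI)
      fix \<pi> :: "nat \<Rightarrow> nat" assume h: "bij \<pi>" "\<forall>x\<ge>Suc K. \<pi> x = x" "K - \<pi> K = 0"
      have "\<pi> K = K"
      proof (rule ccontr)
        assume ne: "\<pi> K \<noteq> K"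
        then have "\<pi> K \<ge> Suc K" using h(3) by simp
        then have "\<pi> (\<pi> K) = \<pi> K" using h(2) by simp
        moreover have "inj \<pi>" using h(1) bij_is_inj by blast
        ultimately show False using ne by (meson injD)
      qed
      then have "\<forall>x\<ge>K. \<pi> x = x" using h(2) by (metis Suc_leI le_neq_implies_less)
      then show "\<pi> \<in> H" using Suc.IH h(1) by blast
    qed
  next
    case (Suc d)
    show ?case
    proof (intro allI impI)
      fix \<pi> :: "nat \<Rightarrow> nat" assume h: "bij \<pi>" "\<forall>x\<ge>Suc K. \<pi> x = x" "K - \<pi> K = Suc d"
      define j where "j = \<pi> K"
      have jK: "j < K" using h(3) j_def by simp
      define \<pi>1 where "\<pi>1 = adj_swap j \<circ> \<pi>"
      have "bij \<pi>1" unfolding \<pi>1_def using bij_comp[OF h(1) swap_bij] .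
      moreover have "\<forall>x\<ge>Suc K. \<pi>1 x = x" using h(2) jK by (auto simp: \<pi>1_def adj_swap_def)
      moreover have "K - \<pi>1 K = d" using h(3) jK by (simp add: \<pi>1_def j_def adj_swap_def)
      ultimately have "\<pi>1 \<in> H" using Suc.IH by blast
      then have "adj_swap j \<circ> \<pi>1 \<in> H" by (rule H2)
      moreover have "adj_swap j \<circ> \<pi>1 = \<pi>" by (simp add: \<pi>1_def fun_eq_iff)
      ultimately show "\<pi> \<in> H" by simp
    qed
  qed
  then show ?case by blast
qed

lemma fin_perm_GB:
  "\<forall>\<pi>. bij \<pi> \<longrightarrow> (\<forall>x\<ge>K. \<pi> x = x) \<longrightarrow> \<pi> \<in> G_B"
  by (rule fin_perm_gen[OF GB_id GB_mult[OF swap_GB]])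

lemma approx:
  assumes "bij (\<tau>::nat \<Rightarrow> nat)"
  shows "\<exists>\<pi>. bij \<pi> \<and> (\<exists>K. \<forall>x\<ge>K. \<pi> x = x) \<and> (\<forall>i\<le>n. \<pi> i = \<tau> i \<and> Hilbert_Choice.inv \<pi> i = Hilbert_Choice.inv \<tau> i)"
proof -
  define S where "S = {..n} \<union> Hilbert_Choice.inv \<tau> ` {..n}"
  define T where "T = \<tau> ` S"
  have fS: "finite S" "finite T" by (simp_all add: S_def T_def)
  define K where "K = Suc (Max (S \<union> T))"
  have SK: "S \<subseteq> {..<K}" "T \<subseteq> {..<K}"
  proof -
    have "x \<le> Max (S \<union> T)" if "x \<in> S \<union> T" for x using fS that by (intro Max_ge) auto
    then show "S \<subseteq> {..<K}" "T \<subseteq> {..<K}" unfolding K_def by (auto simp: less_Suc_eq_le)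
  qed
  have injt: "inj \<tau>" using assms bij_is_inj by blast
  have injS: "inj_on \<tau> S" using inj_on_subset[OF injt subset_UNIV] .
  have cST: "card T = card S" unfolding T_def using injS by (rule card_image)
  have "card ({..<K} - S) = card ({..<K} - T)"
    using SK fS cST by (simp add: card_Diff_subset)
  then obtain h where h: "bij_betw h ({..<K} - S) ({..<K} - T)"
    using finite_same_card_bij by (metis finite_Diff finite_lessThan)
  define \<pi> where "\<pi> x = (if x \<in> S then \<tau> x else if x < K then h x else x)" for x
  have "bij_betw \<tau> S T" unfolding T_def using injS by (rule inj_on_imp_bij_betw)
  moreover have "\<And>a. a \<in> S \<Longrightarrow> \<pi> a = \<tau> a" by (simp add: \<pi>_def)
  ultimately have b1: "bij_betw \<pi> S T" using bij_betw_cong by blast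
  have "\<And>a. a \<in> {..<K} - S \<Longrightarrow> \<pi> a = h a" by (simp add: \<pi>_def)
  then have b2: "bij_betw \<pi> ({..<K} - S) ({..<K} - T)" using h bij_betw_cong by blast
  have "\<And>a. a \<in> {K..} \<Longrightarrow> \<pi> a = id a" using SK by (auto simp: \<pi>_def)
  moreover have "bij_betw id {K..} {K..}" by simp
  ultimately have b3: "bij_betw \<pi> {K..} {K..}" using bij_betw_cong by blast
  have "bij_betw \<pi> ((S \<union> ({..<K} - S)) \<union> {K..}) ((T \<union> ({..<K} - T)) \<union> {K..})"
    using SK(2) by (intro bij_betw_combine b1 b2 b3) (auto simp: subset_iff)
  moreover have "(S \<union> ({..<K} - S)) \<union> {K..} = UNIV" "(T \<union> ({..<K} - T)) \<union> {K..} = UNIV"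
    by auto
  ultimately have bp: "bij \<pi>" by simp
  have fx: "\<forall>x\<ge>K. \<pi> x = x" using SK by (auto simp: \<pi>_def)
  have "\<pi> i = \<tau> i \<and> Hilbert_Choice.inv \<pi> i = Hilbert_Choice.inv \<tau> i" if "i \<le> n" for i
  proof
    show "\<pi> i = \<tau> i" using that by (simp add: \<pi>_def S_def)
    have "Hilbert_Choice.inv \<tau> i \<in> S" using that by (simp add: S_def)
    then have "\<pi> (Hilbert_Choice.inv \<tau> i) = i" using assms by (simp add: \<pi>_def surj_f_inv_f bij_is_surj)
    then show "Hilbert_Choice.inv \<pi> i = Hilbert_Choice.inv \<tau> i" using bp by (metis bij_inv_eq_iff)
  qed
  then show ?thesis using bp fx by blast
qed

lemma rho_le:
  assumes "\<forall>i\<le>n. f i = g i"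
  shows "rho f g \<le> (1/2) ^ Suc n"
proof (cases "f = g")
  case True then show ?thesis by (simp add: rho_def)
next
  case False
  then obtain i where "f i \<noteq> g i" by auto
  then have "f (LEAST i. f i \<noteq> g i) \<noteq> g (LEAST i. f i \<noteq> g i)" by (rule LeastI)
  then have "Suc n \<le> (LEAST i. f i \<noteq> g i)" using assms by (meson not_less_eq_eq)
  then have "(1/2::real) ^ (LEAST i. f i \<noteq> g i) \<le> (1/2) ^ Suc n"
    by (rule power_decreasing) auto
  then show ?thesis using False by (simp add: rho_def)
qed

theorem mainTheorem8:
  "\<forall>\<tau>::nat \<Rightarrow> nat. bij \<tau> \<longrightarrow> (\<forall>\<epsilon>>0. \<exists>g\<in>G_B. perm_dist g \<tau> < \<epsilon>)"
proof (intro allI impI)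
  fix \<tau> :: "nat \<Rightarrow> nat" and \<epsilon> :: real
  assume t: "bij \<tau>" and e: "\<epsilon> > 0"
  obtain n where n: "(1/2::real) ^ n < \<epsilon>" using real_arch_pow_inv[OF e, of "1/2"] by auto
  obtain \<pi> where p: "bij \<pi>" "\<exists>K. \<forall>x\<ge>K. \<pi> x = x" "\<forall>i\<le>n. \<pi> i = \<tau> i \<and> Hilbert_Choice.inv \<pi> i = Hilbert_Choice.inv \<tau> i"
    using approx[OF t] by blast
  have g: "\<pi> \<in> G_B" using p(1,2) fin_perm_GB by blast
  have "rho \<pi> \<tau> \<le> (1/2) ^ Suc n" using p(3) by (intro rho_le) auto
  moreover have "rho (Hilbert_Choice.inv \<pi>) (Hilbert_Choice.inv \<tau>) \<le> (1/2) ^ Suc n" using p(3) by (intro rho_le) auto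
  moreover have "(1/2::real) ^ Suc n < \<epsilon>" 
  proof -
    have "(1/2::real) ^ Suc n \<le> (1/2) ^ n" by (rule power_decreasing) auto
    then show ?thesis using n by linarith
  qed
  ultimately have "perm_dist \<pi> \<tau> < \<epsilon>" by (simp add: perm_dist_def)
  then show "\<exists>g\<in>G_B. perm_dist g \<tau> < \<epsilon>" using g by blast
qed


end
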